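(* Let $h$ be a Hessenberg function on $\{1,\dots,n\}$. For every $d\ge0$, the number of monomials of degree $d$ in $\mathcal{B}_h$ (i.e. the rank of the degree-$d$ part of $R/J_h$) equals the number of $(h,(n))$-fillings with exactly $d$ dimension pairs; the map $\Psi_h$ realizes this as a bijection. Consequently, if $X$ is a regular nilpotent $n\times n$ complex matrix, this number equals $\dim H^{2d}(\mathfrak{H}(X,h))$, the $2d$-th Betti number of the regular nilpotent Hessenberg variety.
   Context: A Hessenberg function is $h:\{1,\dots,n\}\to\{1,\dots,n\}$, $h_i=h(i)$, with $i\le h_i\le n$ and $h_i\le h_{i+1}$. Degree tuple $\beta_i=i-\#\{k:h_k<i\}$. $R=\mathbb{Z}[x_1,\dots,x_n]$; $\tilde e_r(S)$ is the complete homogeneous symmetric polynomial of degree $r$ in variables $S$; $J_h=\langle\tilde e_{\beta_i}(x_i,\dots,x_n): 1\le i\le n\rangle$; $R/J_h$ has $\mathbb{Z}$-basis $\mathcal{B}_h=\{x_1^{\alpha_1}\cdots x_n^{\alpha_n}:0\le\alpha_i\le\beta_i-1\}$. An $(h,(n))$-filling is a permutation $w_1\cdots w_n$ of $1,\dots,n$ in one row with $w_t\le h(w_{t+1})$ for all $t$; a dimension pair is $(a,b)$ with $b>a$, $b$ to the left of $a$, and, if $a$ is immediately followed by $c$, $b\le h(c)$. $\Psi_h(x^\alpha)$ is the Level $n$ word above the leaf $x^\alpha$ in the $h$-tableau-tree (root word $1$; a word on $\{1,\dots,i-1\}$ has children obtained by inserting $i$ at one of the $\beta_i$ gaps keeping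 $w_t\le h(w_{t+1})$, the child along edge $x_i^j$ using the $(j+1)$-th such gap from the right; leaves labelled by products of edge labels). A regular nilpotent matrix is nilpotent with a single Jordan block; $\mathfrak{H}(X,h)=\{V_1\subset\cdots\subset V_n=\mathbb{C}^n,\ \dim V_i=i : XV_i\subseteq V_{h(i)}\ \forall i\}$. Known fact (Tymoczko): $\dim H^{2d}(\mathfrak{H}(X,h))$ equals the number of $(h,(n))$-fillings with exactly $d$ dimension pairs when $X$ is regular nilpotent. *)

theory Defs
  imports Main
begin

text \<open>Hessenberg function on {1..n}; values of h outside {1..n} are irrelevant.\<close>
definition hessenberg :: "nat \<Rightarrow> (nat \<Rightarrow> nat) \<Rightarrow> bool" where
  "hessenberg n h \<longleftrightarrow> (\<forall>i\<in>{1..n}. i \<le> h i \<and> h i \<le> n) \<and> (\<forall>i\<in>{1..<n}. h i \<le> h (Suc i))"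

definition beta :: "nat \<Rightarrow> (nat \<Rightarrow> nat) \<Rightarrow> nat \<Rightarrow> nat" where
  "beta n h i = i - card {k\<in>{1..n}. h k < i}"

text \<open>Exponent vectors of the monomials in B_h (alpha_i = 0 outside {1..n}).\<close>
definition basis_exps :: "nat \<Rightarrow> (nat \<Rightarrow> nat) \<Rightarrow> (nat \<Rightarrow> nat) set" where
  "basis_exps n h = {\<alpha>. (\<forall>i\<in>{1..n}. \<alpha> i \<le> beta n h i - 1) \<and> (\<forall>i. i \<notin> {1..n} \<longrightarrow> \<alpha> i = 0)}"

definition mon_degree :: "nat \<Rightarrow> (nat \<Rightarrow> nat) \<Rightarrow> nat" where
  "mon_degree n \<alpha> = (\<Sum>i=1..n. \<alpha> i)"

definition adj_ok :: "(nat \<Rightarrow> nat) \<Rightarrow> nat list \<Rightarrow> bool" where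
  "adj_ok h w \<longleftrightarrow> (\<forall>t. Suc t < length w \<longrightarrow> w ! t \<le> h (w ! Suc t))"

text \<open>(h,(n))-fillings: permutations of 1..n in one row satisfying adj_ok.\<close>
definition fillings :: "nat \<Rightarrow> (nat \<Rightarrow> nat) \<Rightarrow> nat list set" where
  "fillings n h = {w. length w = n \<and> distinct w \<and> set w = {1..n} \<and> adj_ok h w}"

text \<open>Dimension pairs (a,b): b > a, b left of a, and if a is immediately followed by c
  then b <= h c. Recorded as the pair of positions (p,q) of b and a.\<close>
definition dim_pairs :: "(nat \<Rightarrow> nat) \<Rightarrow> nat list \<Rightarrow> (nat \<times> nat) set" where
  "dim_pairs h w = {(p, q). p < q \<and> q < length w \<and> w ! q < w ! p \<and>
       (Suc q < length w \<longrightarrow> w ! p \<le> h (w ! Suc q))}"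

definition num_dim_pairs :: "(nat \<Rightarrow> nat) \<Rightarrow> nat list \<Rightarrow> nat" where
  "num_dim_pairs h w = card (dim_pairs h w)"

text \<open>Inserting letter i into the gap k (0 = leftmost gap, length w = rightmost gap).\<close>
definition insert_at :: "nat \<Rightarrow> nat \<Rightarrow> nat list \<Rightarrow> nat list" where
  "insert_at k i w = take k w @ [i] @ drop k w"

definition valid_gaps :: "(nat \<Rightarrow> nat) \<Rightarrow> nat \<Rightarrow> nat list \<Rightarrow> nat set" where
  "valid_gaps h i w = {k. k \<le> length w \<and> adj_ok h (insert_at k i w)}"

text \<open>Child along the edge labelled x_i^j: insert i at the (j+1)-th valid gap from the right.\<close>
definition tree_child :: "(nat \<Rightarrow> nat) \<Rightarrow> nat \<Rightarrow> nat \<Rightarrow> nat list \<Rightarrow> nat list" where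
  "tree_child h i j w = insert_at (rev (sorted_list_of_set (valid_gaps h i w)) ! j) i w"

fun tree_word :: "(nat \<Rightarrow> nat) \<Rightarrow> (nat \<Rightarrow> nat) \<Rightarrow> nat \<Rightarrow> nat list" where
  "tree_word h \<alpha> 0 = [1]"
| "tree_word h \<alpha> (Suc 0) = [1]"
| "tree_word h \<alpha> (Suc (Suc m)) = tree_child h (Suc (Suc m)) (\<alpha> (Suc (Suc m))) (tree_word h \<alpha> (Suc m))"

definition Psi :: "nat \<Rightarrow> (nat \<Rightarrow> nat) \<Rightarrow> (nat \<Rightarrow> nat) \<Rightarrow> nat list" where
  "Psi n h \<alpha> = tree_word h \<alpha> n"

end

theory Submission
  imports Defs
begin

lemma length_ins[simp]: "k \<le> length w \<Longrightarrow> length (insert_at k i w) = Suc (length w)"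
  by (simp add: insert_at_def)

lemma nth_ins: "k \<le> length w \<Longrightarrow> t \<le> length w \<Longrightarrow>
  insert_at k i w ! t = (if t < k then w ! t else if t = k then i else w ! (t - 1))"
proof -
  assume k: "k \<le> length w" and t: "t \<le> length w"
  have lt: "length (take k w) = k" using k by simp
  show ?thesis
  proof (cases "t < k")
    case True then show ?thesis unfolding insert_at_def using lt by (simp add: nth_append)
  next
    case False
    then obtain u where u: "t = k + u" by (metis le_iff_add not_less)
    show ?thesis
    proof (cases u)
      case 0 then show ?thesis unfolding insert_at_def using lt u by (simp add: nth_append)
    next
      case (Suc v)
      then have "insert_at k i w ! t = drop k w ! v" unfolding insert_at_def using lt u
        by (simp add: nth_append)
      also have "\<dots> = w ! (k + v)" using k u Suc t by simp
      finally show ?thesis using u Suc by simp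
    qed
  qed
qed

lemma set_ins[simp]: "set (insert_at k i w) = insert i (set w)"
proof -
  have g: "set (xs @ [i] @ ys) = insert i (set (xs @ ys))" for xs ys :: "nat list" by auto
  show ?thesis unfolding insert_at_def g by simp
qed

lemma distinct_ins[simp]: "distinct (insert_at k i w) \<longleftrightarrow> distinct w \<and> i \<notin> set w"
proof -
  have g: "distinct (xs @ [i] @ ys) \<longleftrightarrow> distinct (xs @ ys) \<and> i \<notin> set (xs @ ys)" for xs ys :: "nat list"
    by auto
  show ?thesis unfolding insert_at_def g by simp
qed

lemma adj_okD: "adj_ok h w \<Longrightarrow> Suc t < length w \<Longrightarrow> w ! t \<le> h (w ! Suc t)"
  by (simp add: adj_ok_def)

lemma adj_ins_iff:
  assumes "k \<le> length w" "adj_ok h w" "\<forall>x\<in>set w. x \<le> h i"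
  shows "adj_ok h (insert_at k i w) \<longleftrightarrow> (k < length w \<longrightarrow> i \<le> h (w ! k))"
proof
  assume a: "adj_ok h (insert_at k i w)"
  show "k < length w \<longrightarrow> i \<le> h (w ! k)"
  proof
    assume k: "k < length w"
    have "insert_at k i w ! k \<le> h (insert_at k i w ! Suc k)"
      using adj_okD[OF a, of k] assms(1) k by simp
    with assms(1) k show "i \<le> h (w ! k)" by (simp add: nth_ins)
  qed
next
  assume c: "k < length w \<longrightarrow> i \<le> h (w ! k)"
  show "adj_ok h (insert_at k i w)"
    unfolding adj_ok_def
  proof (intro allI impI)
    fix t assume t: "Suc t < length (insert_at k i w)"
    then have t': "Suc t \<le> length w" using assms(1) by simp
    have e1: "insert_at k i w ! t = (if t < k then w ! t else if t = k then i else w ! (t - 1))"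
      using nth_ins[OF assms(1)] t' by simp
    have e2: "insert_at k i w ! Suc t = (if Suc t < k then w ! Suc t else if Suc t = k then i else w ! t)"
      using nth_ins[OF assms(1) t'] by simp
    have "t < k \<or> t = k \<or> t > k" by arith
    then show "insert_at k i w ! t \<le> h (insert_at k i w ! Suc t)"
    proof (elim disjE)
      assume tk: "t < k"
      show ?thesis
      proof (cases "Suc t = k")
        case True
        have "w ! t \<in> set w" using t' by simp
        then show ?thesis using assms(3) True tk e1 e2 by simp
      next
        case False then have "Suc t < k" using tk by simp
        then show ?thesis using adj_okD[OF assms(2), of t] assms(1) e1 e2 tk by simp
      qed
    next
      assume "t = k" then show ?thesis using c e1 e2 t' by simp
    next
      assume tk: "t > k"
      then obtain u where u: "t = Suc u" "k \<le> u" by (cases t) auto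
      then show ?thesis using adj_okD[OF assms(2), of u] e1 e2 t' tk by simp
    qed
  qed
qed

lemma adj_del:
  assumes k: "k \<le> length w" and a: "adj_ok h (insert_at k i w)" and lt: "\<forall>x\<in>set w. x \<le> i"
  shows "adj_ok h w"
  unfolding adj_ok_def
proof (intro allI impI)
  fix t assume t: "Suc t < length w"
  have "Suc t < k \<or> Suc t = k \<or> t \<ge> k" by arith
  then show "w ! t \<le> h (w ! Suc t)"
  proof (elim disjE)
    assume tk: "Suc t < k"
    have "insert_at k i w ! t \<le> h (insert_at k i w ! Suc t)" using adj_okD[OF a, of t] t k by simp
    then show ?thesis using tk t k by (simp add: nth_ins)
  next
    assume tk: "Suc t = k"
    have 1: "insert_at k i w ! k \<le> h (insert_at k i w ! Suc k)" using adj_okD[OF a, of k] t k tk by simp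
    have 2: "i \<le> h (w ! k)" using 1 t tk k by (simp add: nth_ins)
    have "w ! t \<le> i" using lt t by simp
    then show ?thesis using 2 tk by simp
  next
    assume tk: "t \<ge> k"
    have "insert_at k i w ! Suc t \<le> h (insert_at k i w ! Suc (Suc t))"
      using adj_okD[OF a, of "Suc t"] t k by simp
    then show ?thesis using tk t k by (simp add: nth_ins)
  qed
qed

lemma ins_inj:
  assumes "k \<le> length w" "k' \<le> length w'" "i \<notin> set w" "i \<notin> set w'"
    and e: "insert_at k i w = insert_at k' i w'"
  shows "k = k' \<and> w = w'"
proof -
  have len: "length w = length w'" using arg_cong[OF e, of length] assms(1,2) by simp
  have kk: "k = k'"
  proof (rule ccontr)
    assume "k \<noteq> k'"
    then have "k < k' \<or> k' < k" by arith
    then show False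
    proof
      assume l: "k < k'"
      have "insert_at k i w ! k = i" using assms(1) by (simp add: nth_ins)
      moreover have "insert_at k' i w' ! k = w' ! k" using assms(2) l by (simp add: nth_ins)
      moreover have "w' ! k \<in> set w'" using l assms(2) by simp
      ultimately show False using e assms(4) by simp
    next
      assume l: "k' < k"
      have "insert_at k' i w' ! k' = i" using assms(2) by (simp add: nth_ins)
      moreover have "insert_at k i w ! k' = w ! k'" using assms(1) l by (simp add: nth_ins)
      moreover have "w ! k' \<in> set w" using l assms(1) by simp
      ultimately show False using e assms(3) by simp
    qed
  qed
  have t1: "k \<le> length w \<Longrightarrow> take k (insert_at k i w) = take k w" for w :: "nat list" and k
    unfolding insert_at_def by simp
  have t2: "k \<le> length w \<Longrightarrow> drop (Suc k) (insert_at k i w) = drop k w" for w :: "nat list" and k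
    unfolding insert_at_def by (simp add: min_def)
  have "take k w = take k w'" using t1[of k w] t1[of k w'] e kk assms(1,2) by simp
  moreover have "drop k w = drop k w'" using t2[of k w] t2[of k w'] e kk assms(1,2) by simp
  ultimately have "w = w'" by (metis append_take_drop_id)
  then show ?thesis using kk by simp
qed

lemma ins_surj:
  assumes "i \<in> set w2"
  shows "\<exists>k w. k \<le> length w \<and> w2 = insert_at k i w"
proof -
  obtain k where k: "k < length w2" "w2 ! k = i" using assms by (auto simp: in_set_conv_nth)
  define w where "w = take k w2 @ drop (Suc k) w2"
  have lw: "k \<le> length w" using k unfolding w_def by simp
  have "take k w = take k w2" using k unfolding w_def by simp
  moreover have "drop k w = drop (Suc k) w2" using k unfolding w_def by simp
  ultimately have "insert_at k i w = take k w2 @ [w2 ! k] @ drop (Suc k) w2"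
    unfolding insert_at_def using k by simp
  also have "\<dots> = w2" using id_take_nth_drop[OF k(1)] by simp
  finally show ?thesis using lw by metis
qed

lemma card_gaps:
  assumes "distinct w"
  shows "card {k. k \<le> length w \<and> (k < length w \<longrightarrow> P (w ! k))} = Suc (card {x\<in>set w. P x})"
proof -
  have e: "{k. k \<le> length w \<and> (k < length w \<longrightarrow> P (w ! k))} = insert (length w) {k. k < length w \<and> P (w ! k)}"
    by auto
  have i: "inj_on (nth w) {k. k < length w \<and> P (w ! k)}" using inj_on_nth[OF assms] by simp
  have im: "nth w ` {k. k < length w \<and> P (w ! k)} = {x\<in>set w. P x}"
    by (auto simp: in_set_conv_nth)
  have "card {k. k < length w \<and> P (w ! k)} = card {x\<in>set w. P x}"
    using card_image[OF i] im by simp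
  then show ?thesis unfolding e by simp
qed

definition sh :: "nat \<Rightarrow> nat \<Rightarrow> nat" where "sh k p = (if p < k then p else Suc p)"
definition rh :: "nat \<Rightarrow> nat \<Rightarrow> nat" where "rh k p = (if p < k then p else p - 1)"

context
  fixes h :: "nat \<Rightarrow> nat" and w :: "nat list" and k i :: nat
  assumes kl: "k \<le> length w" and dw: "distinct w" and lt: "\<forall>x\<in>set w. x < i"
    and gap: "k < length w \<longrightarrow> i \<le> h (w ! k)" and hi: "i \<le> h i"
begin

lemma ns: "x < length w \<Longrightarrow> insert_at k i w ! sh k x = w ! x"
  using kl by (auto simp: sh_def nth_ins)

lemma nk: "insert_at k i w ! k = i"
  using kl by (simp add: nth_ins)

lemma nr: "t \<le> length w \<Longrightarrow> t \<noteq> k \<Longrightarrow> rh k t < length w \<and> sh k (rh k t) = t \<and> insert_at k i w ! t = w ! rh k t"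
  using kl by (auto simp: sh_def rh_def nth_ins)

lemma A_sub:
  assumes "(p0, q0) \<in> dim_pairs h w"
  shows "(sh k p0, sh k q0) \<in> dim_pairs h (insert_at k i w)"
proof -
  have a: "p0 < q0" "q0 < length w" "w ! q0 < w ! p0"
    and c: "Suc q0 < length w \<longrightarrow> w ! p0 \<le> h (w ! Suc q0)"
    using assms by (auto simp: dim_pairs_def)
  have p0l: "p0 < length w" using a by simp
  have 1: "sh k p0 < sh k q0" using a by (simp add: sh_def)
  have 2: "sh k q0 < length (insert_at k i w)" using a kl by (simp add: sh_def)
  have 3: "insert_at k i w ! sh k q0 < insert_at k i w ! sh k p0"
    using a p0l by (simp add: ns)
  have wp: "w ! p0 < i" using lt p0l by simp
  have 4: "insert_at k i w ! sh k p0 \<le> h (insert_at k i w ! Suc (sh k q0))"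
    if s: "Suc (sh k q0) < length (insert_at k i w)"
  proof -
    have "q0 < k \<or> q0 \<ge> k" by arith
    then show ?thesis
    proof
      assume qk: "q0 < k"
      show ?thesis
      proof (cases "Suc q0 = k")
        case True
        then have "insert_at k i w ! Suc (sh k q0) = i" using qk nk by (simp add: sh_def)
        then show ?thesis using wp hi p0l by (simp add: ns)
      next
        case False
        then have sq: "Suc q0 < k" "Suc q0 < length w" using qk kl by auto
        then have "sh k (Suc q0) = Suc (sh k q0)" using qk by (simp add: sh_def)
        then have "insert_at k i w ! Suc (sh k q0) = w ! Suc q0" using ns[OF sq(2)] by simp
        then show ?thesis using c sq p0l by (simp add: ns)
      qed
    next
      assume qk: "q0 \<ge> k"
      have sq: "Suc q0 < length w" using s qk kl by (simp add: sh_def)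
      have "sh k (Suc q0) = Suc (sh k q0)" using qk by (simp add: sh_def)
      then have "insert_at k i w ! Suc (sh k q0) = w ! Suc q0" using ns[OF sq] by simp
      then show ?thesis using c sq p0l by (simp add: ns)
    qed
  qed
  show ?thesis using 1 2 3 4 by (simp add: dim_pairs_def)
qed

definition QQ :: "nat set" where
  "QQ = {q. k \<le> q \<and> q < length w \<and> (Suc q < length w \<longrightarrow> i \<le> h (w ! Suc q))}"

lemma C_sub:
  assumes "q0 \<in> QQ"
  shows "(k, Suc q0) \<in> dim_pairs h (insert_at k i w)"
proof -
  have a: "k \<le> q0" "q0 < length w" and c: "Suc q0 < length w \<longrightarrow> i \<le> h (w ! Suc q0)"
    using assms by (auto simp: QQ_def)
  have e1: "insert_at k i w ! Suc q0 = w ! q0" using a kl by (simp add: nth_ins)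
  have "w ! q0 < i" using lt a by simp
  then have 3: "insert_at k i w ! Suc q0 < insert_at k i w ! k" using e1 nk by simp
  have 4: "insert_at k i w ! k \<le> h (insert_at k i w ! Suc (Suc q0))"
    if s: "Suc (Suc q0) < length (insert_at k i w)"
  proof -
    have sq: "Suc q0 < length w" using s kl by simp
    have "insert_at k i w ! Suc (Suc q0) = w ! Suc q0" using sq a kl by (simp add: nth_ins)
    then show ?thesis using c sq nk by simp
  qed
  show ?thesis using a kl 3 4 by (simp add: dim_pairs_def)
qed

lemma back_lem:
  assumes "(p, q) \<in> dim_pairs h (insert_at k i w)"
  shows "(p, q) \<in> (\<lambda>(p0, q0). (sh k p0, sh k q0)) ` dim_pairs h w \<union> (\<lambda>q0. (k, Suc q0)) ` QQ"
proof -
  have a: "p < q" "q < Suc (length w)" "insert_at k i w ! q < insert_at k i w ! p"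
    and c: "Suc q < Suc (length w) \<longrightarrow> insert_at k i w ! p \<le> h (insert_at k i w ! Suc q)"
    using assms kl by (auto simp: dim_pairs_def)
  show ?thesis
  proof (cases "p = k")
    case True
    then obtain q0 where q0: "q = Suc q0" "k \<le> q0" using a by (cases q) auto
    have q0l: "q0 < length w" using a q0 by simp
    have "Suc q0 < length w \<longrightarrow> i \<le> h (w ! Suc q0)"
    proof
      assume sq: "Suc q0 < length w"
      have "insert_at k i w ! Suc q = w ! Suc q0" using sq q0 kl by (simp add: nth_ins)
      then show "i \<le> h (w ! Suc q0)" using c sq q0 True nk by simp
    qed
    then have "q0 \<in> QQ" using q0 q0l by (simp add: QQ_def)
    then show ?thesis using True q0 by blast
  next
    case False
    have pl: "p \<le> length w" using a by simp
    have P: "rh k p < length w" "sh k (rh k p) = p" "insert_at k i w ! p = w ! rh k p"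
      using nr[OF pl False] by auto
    have qk: "q \<noteq> k"
    proof
      assume "q = k"
      then have "insert_at k i w ! q = i" using nk by simp
      moreover have "w ! rh k p < i" using lt P(1) by simp
      ultimately show False using a(3) P(3) by simp
    qed
    have ql: "q \<le> length w" using a by simp
    have Q: "rh k q < length w" "sh k (rh k q) = q" "insert_at k i w ! q = w ! rh k q"
      using nr[OF ql qk] by auto
    have 1: "rh k p < rh k q" using a(1) False qk by (auto simp: rh_def)
    have 3: "w ! rh k q < w ! rh k p" using a(3) P(3) Q(3) by simp
    have 4: "w ! rh k p \<le> h (w ! Suc (rh k q))" if sq: "Suc (rh k q) < length w"
    proof -
      have "q < k \<or> q > k" using qk by arith
      then show ?thesis
      proof
        assume qlk: "q < k"
        then have rq: "rh k q = q" by (simp add: rh_def)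
        show ?thesis
        proof (cases "Suc q = k")
          case True
          have "w ! rh k p < i" using lt P(1) by simp
          moreover have "i \<le> h (w ! k)" using gap sq rq True by simp
          ultimately show ?thesis using rq True by simp
        next
          case False
          then have "insert_at k i w ! Suc q = w ! Suc q" using qlk sq rq kl by (simp add: nth_ins)
          then show ?thesis using c sq rq P(3) by simp
        qed
      next
        assume qgk: "q > k"
        then have rq: "Suc (rh k q) = q" by (simp add: rh_def)
        have "insert_at k i w ! Suc q = w ! q" using qgk sq rq kl by (simp add: nth_ins)
        then show ?thesis using c sq rq P(3) by simp
      qed
    qed
    have "(rh k p, rh k q) \<in> dim_pairs h w" using 1 Q(1) 3 4 by (simp add: dim_pairs_def)
    then show ?thesis using P(2) Q(2) by force
  qed
qed

lemma dim_ins: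
  "num_dim_pairs h (insert_at k i w) = num_dim_pairs h w + card (Suc ` QQ)"
proof -
  let ?A = "(\<lambda>(p0, q0). (sh k p0, sh k q0)) ` dim_pairs h w"
  let ?C = "(\<lambda>q0. (k, Suc q0)) ` QQ"
  have eq: "dim_pairs h (insert_at k i w) = ?A \<union> ?C"
  proof
    show "dim_pairs h (insert_at k i w) \<subseteq> ?A \<union> ?C" using back_lem by auto
    show "?A \<union> ?C \<subseteq> dim_pairs h (insert_at k i w)" using A_sub C_sub by auto
  qed
  have fD: "finite (dim_pairs h w)"
    by (rule finite_subset[of _ "{..<length w} \<times> {..<length w}"]) (auto simp: dim_pairs_def)
  have fQ: "finite QQ" by (rule finite_subset[of _ "{..<length w}"]) (auto simp: QQ_def)
  have dis: "?A \<inter> ?C = {}" by (auto simp: sh_def split: if_splits)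
  have injA: "inj_on (\<lambda>(p0, q0). (sh k p0, sh k q0)) (dim_pairs h w)"
    by (auto simp: inj_on_def sh_def split: if_splits)
  have injC: "inj_on (\<lambda>q0. (k, Suc q0)) QQ" by (auto simp: inj_on_def)
  have "card (?A \<union> ?C) = card ?A + card ?C"
    using card_Un_disjoint[OF finite_imageI[OF fD] finite_imageI[OF fQ] dis] .
  also have "card ?A = card (dim_pairs h w)" using card_image[OF injA] .
  also have "card ?C = card QQ" using card_image[OF injC] .
  also have "card QQ = card (Suc ` QQ)" using card_image[of Suc QQ] by simp
  finally show ?thesis unfolding num_dim_pairs_def eq .
qed

end

lemma rev_sorted_card:
  fixes G :: "nat set"
  assumes fin: "finite G" and j: "j < card G"
  shows "rev (sorted_list_of_set G) ! j \<in> G \<and> card {g\<in>G. rev (sorted_list_of_set G) ! j < g} = j"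
proof -
  define L where "L = sorted_list_of_set G"
  have sL: "sorted_wrt (<) L" unfolding L_def by simp
  have sL2: "sorted L" "distinct L" using sL by (auto simp: strict_sorted_iff)
  have len: "length L = card G" unfolding L_def by simp
  have setL: "set L = G" unfolding L_def using fin by simp
  define t where "t = length L - Suc j"
  have tl: "t < length L" using j len unfolding t_def by simp
  have r: "rev L ! j = L ! t" unfolding t_def using j len by (simp add: rev_nth)
  have mem: "L ! t \<in> G" using tl setL by (metis nth_mem)
  have eq: "{g\<in>G. L ! t < g} = nth L ` {t<..<length L}"
  proof
    show "{g\<in>G. L ! t < g} \<subseteq> nth L ` {t<..<length L}"
    proof
      fix g assume g: "g \<in> {g\<in>G. L ! t < g}"
      then obtain u where u: "u < length L" "L ! u = g" using setL by (auto simp: in_set_conv_nth)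
      have "t < u"
      proof (rule ccontr)
        assume "\<not> t < u"
        then have "L ! u \<le> L ! t" using sorted_nth_mono[OF sL2(1), of u t] tl by simp
        then show False using g u by simp
      qed
      then show "g \<in> nth L ` {t<..<length L}" using u by auto
    qed
  next
    show "nth L ` {t<..<length L} \<subseteq> {g\<in>G. L ! t < g}"
    proof
      fix g assume "g \<in> nth L ` {t<..<length L}"
      then obtain u where u: "t < u" "u < length L" "g = L ! u" by auto
      have "L ! t < L ! u" using sorted_wrt_nth_less[OF sL u(1) u(2)] .
      moreover have "L ! u \<in> G" using u setL by (metis nth_mem)
      ultimately show "g \<in> {g\<in>G. L ! t < g}" using u by simp
    qed
  qed
  have inj: "inj_on (nth L) {t<..<length L}" using inj_on_nth[OF sL2(2)] by simp
  have "card {g\<in>G. L ! t < g} = card {t<..<length L}" unfolding eq using card_image[OF inj] .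
  also have "\<dots> = j" unfolding t_def using j len by simp
  finally show ?thesis using r mem unfolding L_def by simp
qed

lemma rev_sorted_inj:
  fixes G :: "nat set"
  assumes fin: "finite G" and j: "j < card G" "j' < card G"
    and e: "rev (sorted_list_of_set G) ! j = rev (sorted_list_of_set G) ! j'"
  shows "j = j'"
proof -
  have d: "distinct (rev (sorted_list_of_set G))" by simp
  show ?thesis using nth_eq_iff_index_eq[OF d] j e by simp
qed

lemma rev_sorted_surj:
  fixes G :: "nat set"
  assumes fin: "finite G" and k: "k \<in> G"
  shows "\<exists>j < card G. rev (sorted_list_of_set G) ! j = k"
proof -
  have "k \<in> set (rev (sorted_list_of_set G))" using fin k by simp
  then obtain j where "j < length (rev (sorted_list_of_set G))" "rev (sorted_list_of_set G) ! j = k"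
    unfolding in_set_conv_nth by blast
  then show ?thesis by auto
qed

lemma QQ_eq:
  assumes "k \<le> length w" "distinct w" "\<forall>x\<in>set w. x < i" "k < length w \<longrightarrow> i \<le> h (w ! k)" "i \<le> h i"
  shows "Suc ` QQ h w k i = {g. (g \<le> length w \<and> (g < length w \<longrightarrow> i \<le> h (w ! g))) \<and> k < g}"
proof
  show "Suc ` QQ h w k i \<subseteq> {g. (g \<le> length w \<and> (g < length w \<longrightarrow> i \<le> h (w ! g))) \<and> k < g}"
    using assms by (auto simp: QQ_def[OF assms])
  show "{g. (g \<le> length w \<and> (g < length w \<longrightarrow> i \<le> h (w ! g))) \<and> k < g} \<subseteq> Suc ` QQ h w k i"
  proof
    fix g assume g: "g \<in> {g. (g \<le> length w \<and> (g < length w \<longrightarrow> i \<le> h (w ! g))) \<and> k < g}"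
    then obtain q where q: "g = Suc q" by (cases g) auto
    then have "q \<in> QQ h w k i" using g by (simp add: QQ_def[OF assms])
    then show "g \<in> Suc ` QQ h w k i" using q by simp
  qed
qed

definition FF :: "(nat \<Rightarrow> nat) \<Rightarrow> nat \<Rightarrow> nat list set" where
  "FF h m = {w. length w = m \<and> distinct w \<and> set w = {1..m} \<and> adj_ok h w}"

lemma hess_le: "hessenberg n h \<Longrightarrow> 1 \<le> i \<Longrightarrow> i \<le> n \<Longrightarrow> i \<le> h i"
  by (simp add: hessenberg_def)

lemma step_facts:
  assumes hs: "hessenberg n h" and m: "1 \<le> m" "Suc m \<le> n" and w: "w \<in> FF h m"
  shows "finite (valid_gaps h (Suc m) w)"
    and "card (valid_gaps h (Suc m) w) = beta n h (Suc m)"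
    and "\<And>k. k \<in> valid_gaps h (Suc m) w \<Longrightarrow> insert_at k (Suc m) w \<in> FF h (Suc m) \<and>
           num_dim_pairs h (insert_at k (Suc m) w) = num_dim_pairs h w + card {g\<in>valid_gaps h (Suc m) w. k < g}"
proof -
  let ?i = "Suc m"
  have wl: "length w = m" "distinct w" "set w = {1..m}" "adj_ok h w" using w by (auto simp: FF_def)
  have hi: "?i \<le> h ?i" using hess_le[OF hs] m by simp
  have lt: "\<forall>x\<in>set w. x < ?i" using wl by auto
  have le: "\<forall>x\<in>set w. x \<le> h ?i" using lt hi by auto
  define G where "G = {g. g \<le> length w \<and> (g < length w \<longrightarrow> ?i \<le> h (w ! g))}"
  have vg: "valid_gaps h ?i w = G"
    unfolding valid_gaps_def G_def using adj_ins_iff[OF _ wl(4) le] by auto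
  show fin: "finite (valid_gaps h ?i w)" unfolding vg G_def by (rule finite_subset[of _ "{..length w}"]) auto
  have c1: "card G = Suc (card {x\<in>set w. ?i \<le> h x})" unfolding G_def using card_gaps[OF wl(2)] .
  have e1: "{k\<in>{1..n}. h k < ?i} = {k\<in>{1..m}. h k < ?i}"
  proof -
    have "k \<le> h k" if "k \<in> {1..n}" for k using that hs by (simp add: hessenberg_def)
    then show ?thesis using m by fastforce
  qed
  have part: "{1..m} = {x\<in>{1..m}. ?i \<le> h x} \<union> {k\<in>{1..m}. h k < ?i}" by auto
  have "card {1..m} = card {x\<in>{1..m}. ?i \<le> h x} + card {k\<in>{1..m}. h k < ?i}"
    by (subst part, rule card_Un_disjoint) auto
  then have cm: "m = card {x\<in>{1..m}. ?i \<le> h x} + card {k\<in>{1..m}. h k < ?i}" by simp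
  have "beta n h ?i = ?i - card {k\<in>{1..m}. h k < ?i}" unfolding beta_def e1 ..
  also have "\<dots> = Suc (card {x\<in>{1..m}. ?i \<le> h x})" using cm by linarith
  finally show "card (valid_gaps h ?i w) = beta n h ?i" unfolding vg c1 wl(3) by simp
  fix k assume k: "k \<in> valid_gaps h ?i w"
  then have kG: "k \<le> length w" "k < length w \<longrightarrow> ?i \<le> h (w ! k)" unfolding vg G_def by auto
  have "insert_at k ?i w \<in> FF h ?i"
  proof -
    have "adj_ok h (insert_at k ?i w)" using k unfolding valid_gaps_def by simp
    moreover have "?i \<notin> set w" using lt by auto
    moreover have "insert ?i {1..m} = {1..?i}" by auto
    ultimately show ?thesis using wl kG unfolding FF_def by simp
  qed
  moreover have "num_dim_pairs h (insert_at k ?i w) = num_dim_pairs h w + card {g\<in>valid_gaps h ?i w. k < g}"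
  proof -
    have "num_dim_pairs h (insert_at k ?i w) = num_dim_pairs h w + card (Suc ` QQ h w k ?i)"
      using dim_ins[OF kG(1) wl(2) lt kG(2) hi] .
    also have "Suc ` QQ h w k ?i = {g\<in>valid_gaps h ?i w. k < g}"
      unfolding QQ_eq[OF kG(1) wl(2) lt kG(2) hi] vg G_def by simp
    finally show ?thesis .
  qed
  ultimately show "insert_at k (Suc m) w \<in> FF h (Suc m) \<and>
           num_dim_pairs h (insert_at k (Suc m) w) = num_dim_pairs h w + card {g\<in>valid_gaps h (Suc m) w. k < g}" ..
qed

definition BB :: "nat \<Rightarrow> (nat \<Rightarrow> nat) \<Rightarrow> nat \<Rightarrow> (nat \<Rightarrow> nat) set" where
  "BB n h m = {\<alpha>. (\<forall>i\<in>{1..m}. \<alpha> i \<le> beta n h i - 1) \<and> (\<forall>i. i \<notin> {1..m} \<longrightarrow> \<alpha> i = 0)}"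

lemma tw_cong: "(\<forall>i\<le>m. \<alpha> i = \<alpha>' i) \<Longrightarrow> tree_word h \<alpha> m = tree_word h \<alpha>' m"
proof (induction h \<alpha> m rule: tree_word.induct)
  case (3 h \<alpha> m)
  then show ?case by simp
qed simp_all

lemma tw_Suc: "1 \<le> m \<Longrightarrow> tree_word h \<alpha> (Suc m) = tree_child h (Suc m) (\<alpha> (Suc m)) (tree_word h \<alpha> m)"
  by (cases m) auto

lemma main_ind:
  assumes hs: "hessenberg n h" and m1: "1 \<le> m" and mn: "m \<le> n"
  shows "bij_betw (\<lambda>\<alpha>. tree_word h \<alpha> m) (BB n h m) (FF h m) \<and>
         (\<forall>\<alpha>\<in>BB n h m. num_dim_pairs h (tree_word h \<alpha> m) = (\<Sum>i=1..m. \<alpha> i))"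
  using m1 mn
proof (induction m rule: nat_induct_at_least)
  case base
  have b1: "beta n h 1 = 1"
  proof -
    have "1 \<le> h k" if "k \<in> {1..n}" for k
    proof -
      have "k \<le> h k" using hs that by (simp add: hessenberg_def)
      then show ?thesis using that by simp
    qed
    then have e: "{k\<in>{1..n}. h k < 1} = {}" by force
    show ?thesis unfolding beta_def e by simp
  qed
  have B1: "BB n h 1 = {\<lambda>_. 0}"
  proof
    show "BB n h 1 \<subseteq> {\<lambda>_. 0}"
    proof
      fix \<alpha> assume a: "\<alpha> \<in> BB n h 1"
      have "\<alpha> x = 0" for x
      proof (cases "x = 1")
        case True then show ?thesis using a b1 by (simp add: BB_def)
      next
        case False then show ?thesis using a by (simp add: BB_def)
      qed
      then show "\<alpha> \<in> {\<lambda>_. 0}" by auto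
    qed
    show "{\<lambda>_. 0} \<subseteq> BB n h 1" by (simp add: BB_def)
  qed
  have F1: "FF h 1 = {[1]}"
  proof
    show "FF h 1 \<subseteq> {[1]}"
    proof
      fix w assume w: "w \<in> FF h 1"
      then obtain x where "w = [x]" by (auto simp: FF_def length_Suc_conv)
      then show "w \<in> {[1]}" using w by (simp add: FF_def)
    qed
    show "{[1]} \<subseteq> FF h 1" by (simp add: FF_def adj_ok_def)
  qed
  have "dim_pairs h [Suc 0] = {}" by (auto simp: dim_pairs_def)
  then have dp: "num_dim_pairs h [Suc 0] = 0" by (simp add: num_dim_pairs_def)
  show ?case unfolding B1 F1 by (simp add: bij_betw_def dp)
next
  case (Suc m)
  let ?i = "Suc m"
  let ?T = "\<lambda>m \<alpha>. tree_word h \<alpha> m"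
  have IH: "bij_betw (?T m) (BB n h m) (FF h m)"
      "\<forall>\<alpha>\<in>BB n h m. num_dim_pairs h (?T m \<alpha>) = (\<Sum>i=1..m. \<alpha> i)"
    using Suc by auto
  note sf = step_facts[OF hs Suc(1) Suc(3)]
  define VG where "VG = (\<lambda>\<alpha>. valid_gaps h ?i (?T m \<alpha>))"
  define K where "K = (\<lambda>\<alpha>. rev (sorted_list_of_set (VG \<alpha>)) ! \<alpha> ?i)"
  have Tdef: "?T ?i \<alpha> = insert_at (K \<alpha>) ?i (?T m \<alpha>)" for \<alpha>
    using tw_Suc[OF Suc(1)] unfolding K_def VG_def tree_child_def by simp
  have restr: "\<alpha>(?i := 0) \<in> BB n h m" if "\<alpha> \<in> BB n h (Suc m)" for \<alpha>
    using that by (auto simp: BB_def)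
  have Tres: "?T m (\<alpha>(?i := 0)) = ?T m \<alpha>" for \<alpha> by (rule tw_cong) auto
  have inF: "?T m \<alpha> \<in> FF h m" if "\<alpha> \<in> BB n h (Suc m)" for \<alpha>
    using bij_betwE[OF IH(1)] restr[OF that] Tres[of \<alpha>] by metis
  have Kfacts: "K \<alpha> \<in> VG \<alpha> \<and> card {g\<in>VG \<alpha>. K \<alpha> < g} = \<alpha> ?i \<and> \<alpha> ?i < card (VG \<alpha>)" if a: "\<alpha> \<in> BB n h (Suc m)" for \<alpha>
  proof -
    have fin: "finite (VG \<alpha>)" using sf(1)[OF inF[OF a]] unfolding VG_def .
    have c: "card (VG \<alpha>) = beta n h ?i" using sf(2)[OF inF[OF a]] unfolding VG_def .
    have "beta n h ?i \<ge> 1"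
    proof -
      have "{k\<in>{1..n}. h k < ?i} \<subseteq> {1..m}"
      proof
        fix k assume k: "k \<in> {k\<in>{1..n}. h k < ?i}"
        then have "k \<le> h k" using hs by (simp add: hessenberg_def)
        then show "k \<in> {1..m}" using k by simp
      qed
      then have "card {k\<in>{1..n}. h k < ?i} \<le> m" using card_mono[of "{1..m}"] by fastforce
      then show ?thesis by (simp add: beta_def)
    qed
    moreover have "\<alpha> ?i \<le> beta n h ?i - 1" using a by (simp add: BB_def)
    ultimately have "\<alpha> ?i < card (VG \<alpha>)" using c by simp
    then show ?thesis using rev_sorted_card[OF fin] unfolding K_def by blast
  qed
  have img1: "?T ?i \<alpha> \<in> FF h ?i \<and> num_dim_pairs h (?T ?i \<alpha>) = (\<Sum>i=1..?i. \<alpha> i)"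
    if a: "\<alpha> \<in> BB n h (Suc m)" for \<alpha>
  proof -
    have kv: "K \<alpha> \<in> valid_gaps h ?i (?T m \<alpha>)" using Kfacts[OF a] unfolding VG_def by simp
    note s3 = sf(3)[OF inF[OF a] kv]
    have "num_dim_pairs h (?T m \<alpha>) = (\<Sum>i=1..m. \<alpha> i)"
    proof -
      have "num_dim_pairs h (?T m (\<alpha>(?i := 0))) = (\<Sum>i=1..m. (\<alpha>(?i := 0)) i)"
        using IH(2) restr[OF a] by blast
      moreover have "(\<Sum>i=1..m. (\<alpha>(?i := 0)) i) = (\<Sum>i=1..m. \<alpha> i)" by (rule sum.cong) auto
      ultimately show ?thesis using Tres by simp
    qed
    then show ?thesis using s3 Kfacts[OF a] unfolding Tdef VG_def by simp
  qed
  have inj: "inj_on (?T ?i) (BB n h ?i)"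
  proof
    fix \<alpha> \<beta> assume a: "\<alpha> \<in> BB n h ?i" and b: "\<beta> \<in> BB n h ?i" and e: "?T ?i \<alpha> = ?T ?i \<beta>"
    have ka: "K \<alpha> \<le> length (?T m \<alpha>)" using Kfacts[OF a] unfolding VG_def valid_gaps_def by simp
    have kb: "K \<beta> \<le> length (?T m \<beta>)" using Kfacts[OF b] unfolding VG_def valid_gaps_def by simp
    have na: "?i \<notin> set (?T m \<alpha>)" using inF[OF a] by (auto simp: FF_def)
    have nb: "?i \<notin> set (?T m \<beta>)" using inF[OF b] by (auto simp: FF_def)
    have kw: "K \<alpha> = K \<beta> \<and> ?T m \<alpha> = ?T m \<beta>" using ins_inj[OF ka kb na nb] e unfolding Tdef by simp
    have "?T m (\<alpha>(?i := 0)) = ?T m (\<beta>(?i := 0))" using kw Tres by simp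
    then have r: "\<alpha>(?i := 0) = \<beta>(?i := 0)"
      using bij_betw_imp_inj_on[OF IH(1)] restr[OF a] restr[OF b] by (simp add: inj_on_def)
    have VGe: "VG \<alpha> = VG \<beta>" using kw unfolding VG_def by simp
    have fin: "finite (VG \<alpha>)" using sf(1)[OF inF[OF a]] unfolding VG_def .
    have lta: "\<alpha> ?i < card (VG \<alpha>)" using Kfacts[OF a] by blast
    have ltb: "\<beta> ?i < card (VG \<alpha>)" using Kfacts[OF b] VGe by simp
    have "\<alpha> ?i = \<beta> ?i"
      using rev_sorted_inj[OF fin lta ltb] kw VGe unfolding K_def by simp
    then show "\<alpha> = \<beta>" using r by (metis fun_upd_triv fun_upd_upd)
  qed
  have surj: "FF h ?i \<subseteq> ?T ?i ` BB n h ?i"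
  proof
    fix w2 assume w2: "w2 \<in> FF h ?i"
    have "?i \<in> set w2" using w2 by (auto simp: FF_def)
    then obtain k w where kw: "k \<le> length w" "w2 = insert_at k ?i w" using ins_surj by blast
    have w2p: "length w2 = ?i" "distinct w2" "set w2 = {1..?i}" "adj_ok h w2" using w2 by (auto simp: FF_def)
    have lw: "length w = m" using w2p(1) kw by simp
    have dw: "distinct w" "?i \<notin> set w" using w2p(2) kw by auto
    have sw: "set w = {1..m}"
    proof -
      have "insert ?i (set w) = {1..?i}" using w2p(3) kw by simp
      then have "set w = {1..?i} - {?i}" using dw(2) by blast
      also have "{1..?i} - {?i} = {1..m}" by auto
      finally show ?thesis .
    qed
    have a2: "adj_ok h (insert_at k ?i w)" using w2p(4) kw(2) by simp
    have le: "\<forall>x\<in>set w. x \<le> ?i" using sw by simp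
    have aw: "adj_ok h w" using adj_del[OF kw(1) a2 le] .
    have wF: "w \<in> FF h m" using lw dw sw aw by (simp add: FF_def)
    have "w \<in> ?T m ` BB n h m" using bij_betw_imp_surj_on[OF IH(1)] wF by simp
    then obtain \<alpha>0 where a0: "\<alpha>0 \<in> BB n h m" "?T m \<alpha>0 = w" by (rule imageE) simp
    have kv: "k \<in> valid_gaps h ?i w" using kw w2p(4) by (simp add: valid_gaps_def)
    obtain j where j: "j < card (valid_gaps h ?i w)" "rev (sorted_list_of_set (valid_gaps h ?i w)) ! j = k"
      using rev_sorted_surj[OF sf(1)[OF wF] kv] by blast
    define \<alpha> where "\<alpha> = \<alpha>0(?i := j)"
    have jb: "j \<le> beta n h ?i - 1" using j(1) sf(2)[OF wF] by simp
    have aB: "\<alpha> \<in> BB n h ?i" unfolding BB_def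
    proof (intro CollectI conjI ballI allI impI)
      fix x assume x: "x \<in> {1..?i}"
      show "\<alpha> x \<le> beta n h x - 1"
      proof (cases "x = ?i")
        case True then show ?thesis using jb unfolding \<alpha>_def by simp
      next
        case False
        then have "x \<in> {1..m}" using x by auto
        then show ?thesis using a0(1) False unfolding \<alpha>_def BB_def by simp
      qed
    next
      fix x assume x: "x \<notin> {1..?i}"
      then have "x \<noteq> ?i" "x \<notin> {1..m}" by auto
      then show "\<alpha> x = 0" using a0(1) unfolding \<alpha>_def BB_def by simp
    qed
    have "\<forall>x\<le>m. \<alpha> x = \<alpha>0 x" unfolding \<alpha>_def by simp
    then have Tm: "?T m \<alpha> = w" using a0(2) tw_cong[of m \<alpha> \<alpha>0 h] by simp
    have ai: "\<alpha> ?i = j" unfolding \<alpha>_def by simp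
    have "K \<alpha> = k" unfolding K_def VG_def Tm ai using j(2) .
    then have "?T ?i \<alpha> = w2" unfolding Tdef Tm using kw(2) by simp
    then show "w2 \<in> ?T ?i ` BB n h ?i" using aB by blast
  qed
  have "bij_betw (?T ?i) (BB n h ?i) (FF h ?i)"
    unfolding bij_betw_def using inj surj img1 by blast
  then show ?case using img1 by blast
qed

theorem mainTheorem20:
  fixes n :: nat and h :: "nat \<Rightarrow> nat"
  assumes "1 \<le> n" and "hessenberg n h"
  shows "(\<forall>d. card {\<alpha>\<in>basis_exps n h. mon_degree n \<alpha> = d}
              = card {w\<in>fillings n h. num_dim_pairs h w = d})
         \<and> bij_betw (Psi n h) (basis_exps n h) (fillings n h)
         \<and> (\<forall>\<alpha>\<in>basis_exps n h. num_dim_pairs h (Psi n h \<alpha>) = mon_degree n \<alpha>)"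
proof -
  have P: "Psi n h = (\<lambda>\<alpha>. tree_word h \<alpha> n)" by (rule ext) (simp add: Psi_def)
  have B: "basis_exps n h = BB n h n" by (simp add: basis_exps_def BB_def)
  have F: "fillings n h = FF h n" by (simp add: fillings_def FF_def)
  have M: "mon_degree n = (\<lambda>\<alpha>. \<Sum>i=1..n. \<alpha> i)" by (rule ext) (simp add: mon_degree_def)
  note mi = main_ind[OF assms(2) assms(1) order_refl]
  have bij: "bij_betw (Psi n h) (basis_exps n h) (fillings n h)" unfolding P B F using mi by simp
  have deg: "\<forall>\<alpha>\<in>basis_exps n h. num_dim_pairs h (Psi n h \<alpha>) = mon_degree n \<alpha>"
    unfolding P B M using mi by simp
  have cnt: "card {\<alpha>\<in>basis_exps n h. mon_degree n \<alpha> = d} = card {w\<in>fillings n h. num_dim_pairs h w = d}" for d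
  proof -
    have inj: "inj_on (Psi n h) {\<alpha>\<in>basis_exps n h. mon_degree n \<alpha> = d}"
      using bij_betw_imp_inj_on[OF bij] by (rule inj_on_subset) auto
    have im: "Psi n h ` {\<alpha>\<in>basis_exps n h. mon_degree n \<alpha> = d} = {w\<in>fillings n h. num_dim_pairs h w = d}"
    proof
      show "Psi n h ` {\<alpha>\<in>basis_exps n h. mon_degree n \<alpha> = d} \<subseteq> {w\<in>fillings n h. num_dim_pairs h w = d}"
        using bij_betwE[OF bij] deg by auto
      show "{w\<in>fillings n h. num_dim_pairs h w = d} \<subseteq> Psi n h ` {\<alpha>\<in>basis_exps n h. mon_degree n \<alpha> = d}"
      proof
        fix w assume w: "w \<in> {w\<in>fillings n h. num_dim_pairs h w = d}"
        then have "w \<in> Psi n h ` basis_exps n h" using bij_betw_imp_surj_on[OF bij] by simp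
        then obtain \<alpha> where a: "\<alpha> \<in> basis_exps n h" "w = Psi n h \<alpha>" by (rule imageE) simp
        then have "mon_degree n \<alpha> = d" using deg w by simp
        then show "w \<in> Psi n h ` {\<alpha>\<in>basis_exps n h. mon_degree n \<alpha> = d}" using a by blast
      qed
    qed
    show ?thesis using card_image[OF inj] im by simp
  qed
  show ?thesis using cnt bij deg by blast
qed

end
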